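(* Assume $n_1,n_2\in(0,4)$ and (IE). Then for all $\varepsilon\in(0,1)$ and all $t\in(0,T_{max,\varepsilon})$, $$\frac{d}{dt}\int_\Omega u_\varepsilon\le\Big(\lambda_1+\frac{\sqrt\varepsilon}{2\sqrt3}\Big)\int_\Omega u_\varepsilon-\int_\Omega u_\varepsilon^2+a_1\int_\Omega u_\varepsilon v_\varepsilon$$ and $$\frac{d}{dt}\int_\Omega v_\varepsilon\le\Big(\lambda_2+\frac{\sqrt\varepsilon}{2\sqrt3}\Big)\int_\Omega v_\varepsilon-\int_\Omega v_\varepsilon^2-a_2\int_\Omega u_\varepsilon v_\varepsilon+\frac{a_2\sqrt\varepsilon}{2\sqrt3}\int_\Omega u_\varepsilon.$$
   Context: Let $\Omega\subset\mathbb{R}$ be a bounded open interval, $D_i,a_i,\lambda_i,\chi_i>0$ ($i=1,2$), and fix $\alpha\in(0,\frac12]$. Assumption (IE): $u_0,v_0\in W^{1,2}(\Omega)$ with $u_0>0,v_0>0$ in $\overline\Omega$; for each $\varepsilon\in(0,1)$, $u_{0\varepsilon},v_{0\varepsilon}\in C^5(\overline\Omega)$ with $u_{0\varepsilon x}=u_{0\varepsilon xxx}=v_{0\varepsilon x}=v_{0\varepsilon xxx}=0$ on $\partial\Omega$; $\frac12\inf_\Omega u_0\le u_{0\varepsilon}\le u_0+1$, $\frac12\inf_\Omega v_0\le v_{0\varepsilon}\le v_0+1$ in $\Omega$; $\int_\Omega u_{0\varepsilon x}^2\le\int_\Omega u_{0x}^2+1$, $\int_\Omega v_{0\varepsilon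 x}^2\le\int_\Omega v_{0x}^2+1$; $u_{0\varepsilon}\to u_0$, $v_{0\varepsilon}\to v_0$ a.e. as $\varepsilon\searrow0$. Approximating problem: $u_t=-\varepsilon\big(\frac{u^4}{u^{4-n_1}+\varepsilon}u_{xxx}\big)_x+\varepsilon^{\alpha/2}(u^{-\alpha}u_x)_x+D_1u_{xx}-\chi_1\big(\frac{u^{5-n_1}}{u^{4-n_1}+\varepsilon}v_x\big)_x+\frac{3u^3}{3u^2+\varepsilon}(\lambda_1-u+a_1v)$, $v_t=-\varepsilon\big(\frac{v^4}{v^{4-n_2}+\varepsilon}v_{xxx}\big)_x+\varepsilon^{\alpha/2}(v^{-\alpha}v_x)_x+D_2v_{xx}+\chi_2\big(\frac{v^{5-n_2}}{v^{4-n_2}+\varepsilon}u_x\big)_x+\frac{3v^3}{3v^2+\varepsilon}(\lambda_2-v-a_2u)$ in $\Omega\times(0,\infty)$, $u_x=v_x=u_{xxx}=v_{xxx}=0$ on $\partial\Omega$, $u(\cdot,0)=u_{0\varepsilon}$, $v(\cdot,0)=v_{0\varepsilon}$. For $n_i\in(0,4)$ and each $\varepsilon$ it has a classical solution $(u_\varepsilon,v_\varepsilon)$, positive in $\overline\Omega\times[0,T_{max,\varepsilon})$, belonging to $\bigcap_{s\in(3/2,2)}C^0([0,T_{max,\varepsilon});W^{s,2}(\Omega))\cap C^{4,1}(\overline\Omega\times(0,T_{max,\varepsilon}))$, where $T_{max,\varepsilon}\in(0,\infty]$ is maximal: either $T_{max,\varepsilon}=\infty$ or $\limsup_{t\nearrow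 T_{max,\varepsilon}}\{\|u_\varepsilon(\cdot,t)\|_{W^{2,2}}+\|1/u_\varepsilon(\cdot,t)\|_{L^\infty}+\|v_\varepsilon(\cdot,t)\|_{W^{2,2}}+\|1/v_\varepsilon(\cdot,t)\|_{L^\infty}\}=\infty$. *)

theory Defs
  imports "HOL-Analysis.Analysis"
begin

text \<open>The spatial domain is the open interval a < x < b; functions of space-time are
  written u x t.\<close>
definition pdx :: "real \<Rightarrow> real \<Rightarrow> (real \<Rightarrow> real \<Rightarrow> real) \<Rightarrow> real \<Rightarrow> real \<Rightarrow> real" where
  "pdx a b u x t = (THE D. ((\<lambda>y. u y t) has_real_derivative D) (at x within {a..b}))"

text \<open>Partial time derivative (used only for interior times).\<close>
definition pdt :: "(real \<Rightarrow> real \<Rightarrow> real) \<Rightarrow> real \<Rightarrow> real \<Rightarrow> real" where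
  "pdt u x t = deriv (\<lambda>s. u x s) t"

definition tint :: "ereal \<Rightarrow> real set" where
  "tint T = {t. 0 < t \<and> ereal t < T}"

text \<open>Regularity of a classical solution: continuous on [a,b] x [0,T), and
  C^{4,1}([a,b] x (0,T)) (x-derivatives up to order 4 and the t-derivative exist and are
  continuous on [a,b] x (0,T)).\<close>
definition classical_reg :: "real \<Rightarrow> real \<Rightarrow> ereal \<Rightarrow> (real \<Rightarrow> real \<Rightarrow> real) \<Rightarrow> bool" where
  "classical_reg a b T u \<longleftrightarrow>
     continuous_on ({a..b} \<times> {t. 0 \<le> t \<and> ereal t < T}) (\<lambda>(x,t). u x t) \<and>
     (\<forall>k<4. \<forall>t\<in>tint T. \<forall>x\<in>{a..b}.
        ((\<lambda>y. (pdx a b ^^ k) u y t) has_real_derivative ((pdx a b ^^ Suc k) u x t)) (at x within {a..b})) \<and>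
     (\<forall>k\<le>4. continuous_on ({a..b} \<times> tint T) (\<lambda>(x,t). (pdx a b ^^ k) u x t)) \<and>
     (\<forall>t\<in>tint T. \<forall>x\<in>{a..b}. ((\<lambda>s. u x s) has_real_derivative (pdt u x t)) (at t)) \<and>
     continuous_on ({a..b} \<times> tint T) (\<lambda>(x,t). pdt u x t)"

end

theory Submission
  imports Defs
begin


lemma pdx_eq:
  assumes "a < b" "x \<in> {a..b}" "((\<lambda>y. g y t) has_real_derivative D) (at x within {a..b})"
  shows "pdx a b g x t = D"
  unfolding pdx_def
proof (rule the_equality)
  show "((\<lambda>y. g y t) has_real_derivative D) (at x within {a..b})" by (rule assms(3))
next
  fix D' assume "((\<lambda>y. g y t) has_real_derivative D') (at x within {a..b})"
  then show "D' = D"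
    using vector_derivative_unique_within_closed_interval[of a b x "\<lambda>y. g y t" D' D] assms
    by (simp add: has_real_derivative_iff_has_vector_derivative)
qed

lemma pdx_deriv:
  assumes "a < b" "x \<in> {a..b}" "((\<lambda>y. g y t) has_real_derivative D) (at x within {a..b})"
  shows "((\<lambda>y. g y t) has_real_derivative pdx a b g x t) (at x within {a..b})"
  using pdx_eq[of a b x g t D] assms by simp

lemma flux_integral:
  fixes g g' h R :: "real \<Rightarrow> real"
  assumes "a < b" "\<And>x. x \<in> {a..b} \<Longrightarrow> (g has_real_derivative g' x) (at x within {a..b})"
    "g a = 0" "g b = 0" "\<And>x. x \<in> {a<..<b} \<Longrightarrow> h x = g' x + R x" "continuous_on {a..b} R"
  shows "(h has_integral integral {a..b} R) {a..b}"
proof -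
  have "(g' has_integral (g b - g a)) {a..b}"
    using fundamental_theorem_of_calculus[of a b g g'] assms(1,2)
    by (simp add: has_real_derivative_iff_has_vector_derivative)
  hence "(g' has_integral 0) {a..b}" using assms by simp
  moreover have "(R has_integral integral {a..b} R) {a..b}"
    using integrable_continuous_interval[OF assms(6)] by (simp add: integrable_integral)
  ultimately have "((\<lambda>x. g' x + R x) has_integral (0 + integral {a..b} R)) {a..b}"
    by (rule has_integral_add)
  hence "((\<lambda>x. g' x + R x) has_integral integral {a..b} R) {a..b}" by simp
  moreover have "h x = g' x + R x" if "x \<in> {a..b} - {a,b}" for x
    using that assms(5)[of x] by auto
  ultimately show ?thesis
    using has_integral_spike_finite[of "{a,b}" "{a..b}" h "\<lambda>x. g' x + R x"] by blast
qed

lemma deriv_int: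
  assumes reg: "classical_reg a b T w" and t: "t \<in> tint T"
  shows "((\<lambda>s. integral {a..b} (\<lambda>x. w x s)) has_real_derivative integral {a..b} (\<lambda>x. pdt w x t)) (at t)"
proof -
  from t have t0: "0 < t" and tT: "ereal t < T" by (simp_all add: tint_def)
  obtain r where r0: "ereal t < ereal r" and r2: "ereal r < T" using ereal_dense2[OF tT] by blast
  have r: "t < r" "ereal r < T" using r0 r2 by simp_all
  define U where "U = {t/2<..<r}"
  have UT: "U \<subseteq> tint T"
  proof
    fix s assume "s \<in> U"
    hence s0: "0 < s" and sr: "s < r" using t0 by (simp_all add: U_def)
    have "ereal s < ereal r" using sr by simp
    hence "ereal s < T" using r(2) by (rule less_trans)
    then show "s \<in> tint T" using s0 by (simp add: tint_def)
  qed
  have tU: "t \<in> U" using t0 r by (simp add: U_def)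
  have oU: "open U" by (simp add: U_def)
  have cU: "convex U" unfolding U_def by (rule convex_real_interval)
  have c1: "continuous_on ({a..b} \<times> {t. 0 \<le> t \<and> ereal t < T}) (\<lambda>(x,t). w x t)"
    using reg unfolding classical_reg_def by blast
  have c4: "\<And>t x. t \<in> tint T \<Longrightarrow> x \<in> {a..b} \<Longrightarrow> ((\<lambda>s. w x s) has_real_derivative (pdt w x t)) (at t)"
    using reg unfolding classical_reg_def by blast
  have c5: "continuous_on ({a..b} \<times> tint T) (\<lambda>(x,t). pdt w x t)"
    using reg unfolding classical_reg_def by blast
  have "((\<lambda>s. integral (cbox a b) (\<lambda>x. w x s)) has_field_derivative integral (cbox a b) (\<lambda>x. pdt w x t)) (at t within U)"
  proof (rule leibniz_rule_field_derivative[where fx="\<lambda>s x. pdt w x s"])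
    fix s x assume sU: "s \<in> U" and xab: "x \<in> cbox a b"
    have sT: "s \<in> tint T" using UT sU by blast
    have xab': "x \<in> {a..b}" using xab by simp
    show "((\<lambda>s. w x s) has_field_derivative pdt w x s) (at s within U)"
      by (rule has_field_derivative_at_within[OF c4[OF sT xab']])
  next
    fix s assume s: "s \<in> U"
    have sT: "s \<in> tint T" using UT s by blast
    hence s0: "0 \<le> s" and s1: "ereal s < T" by (simp_all add: tint_def)
    have cp: "continuous_on {a..b} (\<lambda>x. (x, s))" by (intro continuous_on_Pair continuous_on_id continuous_on_const)
    have sub: "(\<lambda>x. (x, s)) ` {a..b} \<subseteq> {a..b} \<times> {t. 0 \<le> t \<and> ereal t < T}" using s0 s1 by blast
    have "continuous_on {a..b} (\<lambda>x. (\<lambda>(x,t). w x t) (x, s))"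
      by (rule continuous_on_compose2[OF c1 cp sub])
    hence "continuous_on {a..b} (\<lambda>x. w x s)" by simp
    then show "(\<lambda>x. w x s) integrable_on cbox a b"
      by (simp add: integrable_continuous_interval)
  next
    have cs: "continuous_on (U \<times> {a..b}) (\<lambda>x. (snd x, fst x))"
      by (intro continuous_on_Pair continuous_on_snd continuous_on_fst continuous_on_id)
    have sub: "(\<lambda>x. (snd x, fst x)) ` (U \<times> {a..b}) \<subseteq> {a..b} \<times> tint T" using UT by force
    have "continuous_on (U \<times> {a..b}) (\<lambda>x. (\<lambda>(x,t). pdt w x t) (snd x, fst x))"
      by (rule continuous_on_compose2[OF c5 cs sub])
    then show "continuous_on (U \<times> cbox a b) (\<lambda>(s, x). pdt w x s)"
      by (simp add: split_beta)
  next
    show "t \<in> U" by (rule tU)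
    show "convex U" by (rule cU)
  qed
  moreover have "at t within U = at t" by (rule at_within_open[OF tU oU])
  ultimately show ?thesis by simp
qed

lemma key1:
  fixes u e :: real assumes "u > 0" "e > 0"
  shows "e * u / (3 * u^2 + e) \<le> sqrt e / (2 * sqrt 3)"
proof -
  define s where "s = sqrt e"
  define r where "r = sqrt (3::real)"
  have s: "s > 0" "s^2 = e" using assms by (auto simp: s_def)
  have r: "r > 0" "r^2 = 3" by (auto simp: r_def)
  have q: "3 * u^2 + e > 0" using assms by (simp add: add_pos_nonneg)
  have "0 \<le> s * (r*u - s)^2" using s by simp
  hence "e * u * (2 * r) \<le> s * (3 * u^2 + e)"
    by (simp add: s(2)[symmetric] r(2)[symmetric] power2_eq_square algebra_simps)
  thus ?thesis using q r s unfolding s_def[symmetric] r_def[symmetric]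
    by (simp add: field_simps)
qed


lemma dpowr: fixes f :: "real \<Rightarrow> real"
  assumes "(f has_real_derivative f') (at x within S)" "f x > 0"
  shows "((\<lambda>y. f y powr r) has_real_derivative (r * f x powr (r-1)) * f') (at x within S)"
  by (rule DERIV_chain2[OF has_real_derivative_powr]) (use assms in auto)

lemma dflux1: fixes f g :: "real \<Rightarrow> real"
 assumes "(f has_real_derivative f') (at x within S)" "(g has_real_derivative g') (at x within S)" "f x > 0" "e > 0"
 shows "\<exists>D. ((\<lambda>y. f y ^4 / (f y powr r + e) * g y) has_real_derivative D) (at x within S)"
proof -
  note p = dpowr[OF assms(1,3), of r]
  have d: "f x powr r + e \<noteq> 0" using assms by (smt (verit) powr_ge_zero)
  show ?thesis
    by (rule exI, rule DERIV_mult, rule DERIV_divide, rule DERIV_power, rule assms, rule DERIV_add, rule p, rule DERIV_const, rule d, rule assms)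
qed

lemma dflux2: fixes f g :: "real \<Rightarrow> real"
 assumes "(f has_real_derivative f') (at x within S)" "(g has_real_derivative g') (at x within S)" "f x > 0"
 shows "\<exists>D. ((\<lambda>y. f y powr r * g y) has_real_derivative D) (at x within S)"
proof -
  note p = dpowr[OF assms(1,3), of r]
  show ?thesis
    by (rule exI, rule DERIV_mult, rule p, rule assms)
qed

lemma dflux3: fixes f g :: "real \<Rightarrow> real"
 assumes "(f has_real_derivative f') (at x within S)" "(g has_real_derivative g') (at x within S)" "f x > 0" "e > 0"
 shows "\<exists>D. ((\<lambda>y. f y powr q / (f y powr r + e) * g y) has_real_derivative D) (at x within S)"
proof -
  note p = dpowr[OF assms(1,3), of r]
  note p2 = dpowr[OF assms(1,3), of q]
  have d: "f x powr r + e \<noteq> 0" using assms by (smt (verit) powr_ge_zero)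
  show ?thesis
    by (rule exI, rule DERIV_mult, rule DERIV_divide, rule p2, rule DERIV_add, rule p, rule DERIV_const, rule d, rule assms)
qed

lemma reac_u:
  fixes u v e l a1 :: real assumes "u > 0" "v > 0" "e > 0" "l > 0" "a1 > 0"
  shows "3 * u^3 / (3 * u^2 + e) * (l - u + a1 * v) \<le> (l + sqrt e / (2 * sqrt 3)) * u - u^2 + a1 * (u * v)"
proof -
  define q where "q = 3 * u^2 + e"
  have q: "q > 0" using assms by (simp add: q_def add_pos_nonneg)
  have ee: "e = q - 3 * u^2" unfolding q_def by simp
  have id: "3 * u^3 / q * (l - u + a1 * v) = (3 * u^2 / q) * (u * (l + a1 * v)) - u^2 + (e * u / q) * u"
    unfolding ee using q by (simp add: field_simps power2_eq_square power3_eq_cube)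
  have f1: "3 * u^2 / q \<le> 1" using q assms by (simp add: q_def)
  have f0: "0 \<le> u * (l + a1 * v)" using assms by simp
  have A: "(3 * u^2 / q) * (u * (l + a1 * v)) \<le> u * (l + a1 * v)"
    using mult_right_mono[OF f1 f0] by simp
  have B: "(e * u / q) * u \<le> sqrt e / (2 * sqrt 3) * u"
    using mult_right_mono[OF key1[OF assms(1,3)], of u] assms unfolding q_def by simp
  have "3 * u^3 / q * (l - u + a1 * v) \<le> u * (l + a1 * v) - u^2 + sqrt e / (2 * sqrt 3) * u"
    using id A B by linarith
  thus ?thesis unfolding q_def by (simp add: algebra_simps)
qed

lemma reac_v:
  fixes u v e l a2 :: real assumes "u > 0" "v > 0" "e > 0" "l > 0" "a2 > 0"
  shows "3 * v^3 / (3 * v^2 + e) * (l - v - a2 * u) \<le> (l + sqrt e / (2 * sqrt 3)) * v - v^2 - a2 * (u * v)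
     + a2 * sqrt e / (2 * sqrt 3) * u"
proof -
  define q where "q = 3 * v^2 + e"
  define c where "c = sqrt e / (2 * sqrt 3)"
  have q: "q > 0" using assms by (simp add: q_def add_pos_nonneg)
  have ee: "e = q - 3 * v^2" unfolding q_def by simp
  have id: "3 * v^3 / q * (l - v - a2 * u) = (3 * v^2 / q) * (v * l) - v^2 + (e * v / q) * v
      - a2 * (u * v) + a2 * u * (e * v / q)"
    unfolding ee using q by (simp add: field_simps power2_eq_square power3_eq_cube)
  have f1: "3 * v^2 / q \<le> 1" using q assms by (simp add: q_def)
  have f0: "0 \<le> v * l" using assms by simp
  have A: "(3 * v^2 / q) * (v * l) \<le> v * l"
    using mult_right_mono[OF f1 f0] by simp
  have k: "e * v / q \<le> c" using key1[OF assms(2,3)] unfolding q_def c_def .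
  have B: "(e * v / q) * v \<le> c * v"
    using mult_right_mono[OF k, of v] assms by simp
  have C: "a2 * u * (e * v / q) \<le> a2 * u * c"
    using mult_left_mono[OF k, of "a2 * u"] assms by simp
  have "3 * v^3 / q * (l - v - a2 * u) \<le> v * l - v^2 + c * v - a2 * (u * v) + a2 * u * c"
    using id A B C by linarith
  thus ?thesis unfolding q_def c_def by (simp add: algebra_simps)
qed

theorem lemma2p2:
  fixes a b D1 D2 a1 a2 lam1 lam2 \<chi>1 \<chi>2 \<alpha> n1 n2 \<epsilon> :: real
    and T :: ereal
    and u v :: "real \<Rightarrow> real \<Rightarrow> real"
  assumes ab: "a < b"
    and pars: "D1 > 0" "D2 > 0" "a1 > 0" "a2 > 0" "lam1 > 0" "lam2 > 0" "\<chi>1 > 0" "\<chi>2 > 0"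
    and alpha: "0 < \<alpha>" "\<alpha> \<le> 1/2"
    and n: "0 < n1" "n1 < 4" "0 < n2" "n2 < 4"
    and eps: "0 < \<epsilon>" "\<epsilon> < 1"
    and T: "T > 0"
    and reg: "classical_reg a b T u" "classical_reg a b T v"
    and pos: "\<And>x t. x \<in> {a..b} \<Longrightarrow> 0 \<le> t \<Longrightarrow> ereal t < T \<Longrightarrow> u x t > 0 \<and> v x t > 0"
    and eq_u: "\<And>x t. x \<in> {a<..<b} \<Longrightarrow> t \<in> tint T \<Longrightarrow>
      pdt u x t =
        - \<epsilon> * pdx a b (\<lambda>y s. (u y s)^4 / (u y s powr (4 - n1) + \<epsilon>) * (pdx a b ^^ 3) u y s) x t
        + \<epsilon> powr (\<alpha>/2) * pdx a b (\<lambda>y s. u y s powr (-\<alpha>) * pdx a b u y s) x t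
        + D1 * (pdx a b ^^ 2) u x t
        - \<chi>1 * pdx a b (\<lambda>y s. u y s powr (5 - n1) / (u y s powr (4 - n1) + \<epsilon>) * pdx a b v y s) x t
        + 3 * (u x t)^3 / (3 * (u x t)^2 + \<epsilon>) * (lam1 - u x t + a1 * v x t)"
    and eq_v: "\<And>x t. x \<in> {a<..<b} \<Longrightarrow> t \<in> tint T \<Longrightarrow>
      pdt v x t =
        - \<epsilon> * pdx a b (\<lambda>y s. (v y s)^4 / (v y s powr (4 - n2) + \<epsilon>) * (pdx a b ^^ 3) v y s) x t
        + \<epsilon> powr (\<alpha>/2) * pdx a b (\<lambda>y s. v y s powr (-\<alpha>) * pdx a b v y s) x t
        + D2 * (pdx a b ^^ 2) v x t
        + \<chi>2 * pdx a b (\<lambda>y s. v y s powr (5 - n2) / (v y s powr (4 - n2) + \<epsilon>) * pdx a b u y s) x t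
        + 3 * (v x t)^3 / (3 * (v x t)^2 + \<epsilon>) * (lam2 - v x t - a2 * u x t)"
    and bc: "\<And>x t. x \<in> {a, b} \<Longrightarrow> t \<in> tint T \<Longrightarrow>
      pdx a b u x t = 0 \<and> (pdx a b ^^ 3) u x t = 0 \<and> pdx a b v x t = 0 \<and> (pdx a b ^^ 3) v x t = 0"
    and t: "t \<in> tint T"
  shows "(\<exists>Du. ((\<lambda>s. integral {a..b} (\<lambda>x. u x s)) has_real_derivative Du) (at t) \<and>
           Du \<le> (lam1 + sqrt \<epsilon> / (2 * sqrt 3)) * integral {a..b} (\<lambda>x. u x t)
                 - integral {a..b} (\<lambda>x. (u x t)^2) + a1 * integral {a..b} (\<lambda>x. u x t * v x t)) \<and>
         (\<exists>Dv. ((\<lambda>s. integral {a..b} (\<lambda>x. v x s)) has_real_derivative Dv) (at t) \<and>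
           Dv \<le> (lam2 + sqrt \<epsilon> / (2 * sqrt 3)) * integral {a..b} (\<lambda>x. v x t)
                 - integral {a..b} (\<lambda>x. (v x t)^2) - a2 * integral {a..b} (\<lambda>x. u x t * v x t)
                 + a2 * sqrt \<epsilon> / (2 * sqrt 3) * integral {a..b} (\<lambda>x. u x t))"
proof -
  from t have t0: "0 < t" "ereal t < T" by (auto simp: tint_def)
  have posx: "\<And>x. x \<in> {a..b} \<Longrightarrow> u x t > 0 \<and> v x t > 0" using pos t0 by auto
  have du: "\<And>k x. k < 4 \<Longrightarrow> x \<in> {a..b} \<Longrightarrow>
     ((\<lambda>y. (pdx a b ^^ k) u y t) has_real_derivative (pdx a b ^^ Suc k) u x t) (at x within {a..b})"
    using reg(1) t unfolding classical_reg_def by blast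
  have dv: "\<And>k x. k < 4 \<Longrightarrow> x \<in> {a..b} \<Longrightarrow>
     ((\<lambda>y. (pdx a b ^^ k) v y t) has_real_derivative (pdx a b ^^ Suc k) v x t) (at x within {a..b})"
    using reg(2) t unfolding classical_reg_def by blast
  have du0: "\<And>x. x \<in> {a..b} \<Longrightarrow> ((\<lambda>y. u y t) has_real_derivative pdx a b u x t) (at x within {a..b})"
    using du[of 0] by simp
  have dv0: "\<And>x. x \<in> {a..b} \<Longrightarrow> ((\<lambda>y. v y t) has_real_derivative pdx a b v x t) (at x within {a..b})"
    using dv[of 0] by simp
  have du1: "\<And>x. x \<in> {a..b} \<Longrightarrow> ((\<lambda>y. pdx a b u y t) has_real_derivative (pdx a b ^^ 2) u x t) (at x within {a..b})"
    using du[of 1] by (simp add: eval_nat_numeral)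
  have dv1: "\<And>x. x \<in> {a..b} \<Longrightarrow> ((\<lambda>y. pdx a b v y t) has_real_derivative (pdx a b ^^ 2) v x t) (at x within {a..b})"
    using dv[of 1] by (simp add: eval_nat_numeral)
  have du3: "\<And>x. x \<in> {a..b} \<Longrightarrow> ((\<lambda>y. (pdx a b ^^ 3) u y t) has_real_derivative (pdx a b ^^ 4) u x t) (at x within {a..b})"
    using du[of 3] by (simp add: eval_nat_numeral)
  have dv3: "\<And>x. x \<in> {a..b} \<Longrightarrow> ((\<lambda>y. (pdx a b ^^ 3) v y t) has_real_derivative (pdx a b ^^ 4) v x t) (at x within {a..b})"
    using dv[of 3] by (simp add: eval_nat_numeral)
  have cu: "continuous_on {a..b} (\<lambda>x. u x t)"
    using du0 by (meson DERIV_continuous continuous_on_eq_continuous_within)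
  have cv: "continuous_on {a..b} (\<lambda>x. v x t)"
    using dv0 by (meson DERIV_continuous continuous_on_eq_continuous_within)
  have iu: "(\<lambda>x. u x t) integrable_on {a..b}" using cu integrable_continuous_interval by blast
  have iu2: "(\<lambda>x. (u x t)^2) integrable_on {a..b}"
    by (rule integrable_continuous_interval) (intro continuous_intros cu)
  have iv: "(\<lambda>x. v x t) integrable_on {a..b}" using cv integrable_continuous_interval by blast
  have iv2: "(\<lambda>x. (v x t)^2) integrable_on {a..b}"
    by (rule integrable_continuous_interval) (intro continuous_intros cv)
  have iuv: "(\<lambda>x. u x t * v x t) integrable_on {a..b}"
    by (rule integrable_continuous_interval) (intro continuous_intros cu cv)
  have bca: "pdx a b u a t = 0 \<and> (pdx a b ^^ 3) u a t = 0 \<and> pdx a b v a t = 0 \<and> (pdx a b ^^ 3) v a t = 0"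
    using bc[of a t] t by simp
  have bcb: "pdx a b u b t = 0 \<and> (pdx a b ^^ 3) u b t = 0 \<and> pdx a b v b t = 0 \<and> (pdx a b ^^ 3) v b t = 0"
    using bc[of b t] t by simp

  have dUF1: "((\<lambda>y. (u y t)^4 / (u y t powr (4 - n1) + \<epsilon>) * (pdx a b ^^ 3) u y t) has_real_derivative
      pdx a b (\<lambda>y s. (u y s)^4 / (u y s powr (4 - n1) + \<epsilon>) * (pdx a b ^^ 3) u y s) x t) (at x within {a..b})"
    if x: "x \<in> {a..b}" for x
  proof -
    have ux: "u x t > 0" using posx x by auto
    have "\<exists>D. ((\<lambda>y. (u y t)^4 / (u y t powr (4 - n1) + \<epsilon>) * (pdx a b ^^ 3) u y t) has_real_derivative D) (at x within {a..b})"
      by (rule dflux1[OF du0[OF x] du3[OF x] ux eps(1)])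
    then obtain D where D: "((\<lambda>y. (u y t)^4 / (u y t powr (4 - n1) + \<epsilon>) * (pdx a b ^^ 3) u y t) has_real_derivative D) (at x within {a..b})" by blast
    show ?thesis using pdx_deriv[of a b x "\<lambda>y s. (u y s)^4 / (u y s powr (4 - n1) + \<epsilon>) * (pdx a b ^^ 3) u y s" t D] ab x D by simp
  qed
  have dUF2: "((\<lambda>y. u y t powr (-\<alpha>) * pdx a b u y t) has_real_derivative
      pdx a b (\<lambda>y s. u y s powr (-\<alpha>) * pdx a b u y s) x t) (at x within {a..b})"
    if x: "x \<in> {a..b}" for x
  proof -
    have ux: "u x t > 0" using posx x by auto
    have "\<exists>D. ((\<lambda>y. u y t powr (-\<alpha>) * pdx a b u y t) has_real_derivative D) (at x within {a..b})"
      by (rule dflux2[OF du0[OF x] du1[OF x] ux])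
    then obtain D where D: "((\<lambda>y. u y t powr (-\<alpha>) * pdx a b u y t) has_real_derivative D) (at x within {a..b})" by blast
    show ?thesis using pdx_deriv[of a b x "\<lambda>y s. u y s powr (-\<alpha>) * pdx a b u y s" t D] ab x D by simp
  qed
  have dUF4: "((\<lambda>y. u y t powr (5 - n1) / (u y t powr (4 - n1) + \<epsilon>) * pdx a b v y t) has_real_derivative
      pdx a b (\<lambda>y s. u y s powr (5 - n1) / (u y s powr (4 - n1) + \<epsilon>) * pdx a b v y s) x t) (at x within {a..b})"
    if x: "x \<in> {a..b}" for x
  proof -
    have ux: "u x t > 0" using posx x by auto
    have "\<exists>D. ((\<lambda>y. u y t powr (5 - n1) / (u y t powr (4 - n1) + \<epsilon>) * pdx a b v y t) has_real_derivative D) (at x within {a..b})"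
      by (rule dflux3[OF du0[OF x] dv1[OF x] ux eps(1)])
    then obtain D where D: "((\<lambda>y. u y t powr (5 - n1) / (u y t powr (4 - n1) + \<epsilon>) * pdx a b v y t) has_real_derivative D) (at x within {a..b})" by blast
    show ?thesis using pdx_deriv[of a b x "\<lambda>y s. u y s powr (5 - n1) / (u y s powr (4 - n1) + \<epsilon>) * pdx a b v y s" t D] ab x D by simp
  qed
  define RU where "RU = (\<lambda>x. 3 * (u x t)^3 / (3 * (u x t)^2 + \<epsilon>) * (lam1 - u x t + a1 * v x t))"
  define GU where "GU = (\<lambda>y. - \<epsilon> * ((u y t)^4 / (u y t powr (4 - n1) + \<epsilon>) * (pdx a b ^^ 3) u y t)
        + \<epsilon> powr (\<alpha>/2) * (u y t powr (-\<alpha>) * pdx a b u y t)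
        + D1 * pdx a b u y t
        - \<chi>1 * (u y t powr (5 - n1) / (u y t powr (4 - n1) + \<epsilon>) * pdx a b v y t))"
  define GU' where "GU' = (\<lambda>x. - \<epsilon> * pdx a b (\<lambda>y s. (u y s)^4 / (u y s powr (4 - n1) + \<epsilon>) * (pdx a b ^^ 3) u y s) x t
        + \<epsilon> powr (\<alpha>/2) * pdx a b (\<lambda>y s. u y s powr (-\<alpha>) * pdx a b u y s) x t
        + D1 * (pdx a b ^^ 2) u x t
        - \<chi>1 * pdx a b (\<lambda>y s. u y s powr (5 - n1) / (u y s powr (4 - n1) + \<epsilon>) * pdx a b v y s) x t)"
  have dGU: "(GU has_real_derivative GU' x) (at x within {a..b})" if x: "x \<in> {a..b}" for x
    unfolding GU_def GU'_def
    by (intro DERIV_diff DERIV_add DERIV_cmult dUF1[OF x] dUF2[OF x] du1[OF x] dUF4[OF x])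
  have GUa: "GU a = 0" using bca unfolding GU_def by simp
  have GUb: "GU b = 0" using bcb unfolding GU_def by simp
  have eqU: "pdt u x t = GU' x + RU x" if "x \<in> {a<..<b}" for x
    using eq_u[OF that t] unfolding GU'_def RU_def by simp
  have nzu: "\<And>x. 3 * (u x t)^2 + \<epsilon> \<noteq> 0" using eps(1) by (smt (verit) zero_le_power2)
  have cRU: "continuous_on {a..b} RU"
    unfolding RU_def by (intro continuous_intros cu cv) (use nzu in auto)
  have intU: "((\<lambda>x. pdt u x t) has_integral integral {a..b} RU) {a..b}"
    by (rule flux_integral[OF ab dGU GUa GUb eqU cRU])
  have DU: "((\<lambda>s. integral {a..b} (\<lambda>x. u x s)) has_real_derivative integral {a..b} RU) (at t)"
    using deriv_int[OF reg(1) t] integral_unique[OF intU] by simp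
  have leU: "integral {a..b} RU \<le> integral {a..b} (\<lambda>x. (lam1 + sqrt \<epsilon> / (2 * sqrt 3)) * u x t - (u x t)^2 + a1 * (u x t * v x t))"
  proof (rule integral_le)
    show "RU integrable_on {a..b}" using cRU integrable_continuous_interval by blast
    show "(\<lambda>x. (lam1 + sqrt \<epsilon> / (2 * sqrt 3)) * u x t - (u x t)^2 + a1 * (u x t * v x t)) integrable_on {a..b}"
      by (rule integrable_continuous_interval) (intro continuous_intros cu cv)
    fix x assume x: "x \<in> {a..b}"
    show "RU x \<le> (lam1 + sqrt \<epsilon> / (2 * sqrt 3)) * u x t - (u x t)^2 + a1 * (u x t * v x t)"
      unfolding RU_def using posx[OF x] eps pars by (intro reac_u) auto
  qed
  have intUeq: "integral {a..b} (\<lambda>x. (lam1 + sqrt \<epsilon> / (2 * sqrt 3)) * u x t - (u x t)^2 + a1 * (u x t * v x t))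
     = (lam1 + sqrt \<epsilon> / (2 * sqrt 3)) * integral {a..b} (\<lambda>x. u x t) - integral {a..b} (\<lambda>x. (u x t)^2) + a1 * integral {a..b} (\<lambda>x. u x t * v x t)"
  proof -
    let ?A = "lam1 + sqrt \<epsilon> / (2 * sqrt 3)"
    have j1: "(\<lambda>x. ?A * u x t) integrable_on {a..b}"
      by (rule integrable_continuous_interval) (intro continuous_intros cu)
    have j2: "(\<lambda>x. ?A * u x t - (u x t)^2) integrable_on {a..b}"
      by (rule integrable_continuous_interval) (intro continuous_intros cu)
    have j3: "(\<lambda>x. a1 * (u x t * v x t)) integrable_on {a..b}"
      by (rule integrable_continuous_interval) (intro continuous_intros cu cv)
    have e1: "integral {a..b} (\<lambda>x. ?A * u x t - (u x t)^2 + a1 * (u x t * v x t))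
       = integral {a..b} (\<lambda>x. ?A * u x t - (u x t)^2) + integral {a..b} (\<lambda>x. a1 * (u x t * v x t))"
      by (rule integral_add[OF j2 j3])
    have e2: "integral {a..b} (\<lambda>x. ?A * u x t - (u x t)^2) = integral {a..b} (\<lambda>x. ?A * u x t) - integral {a..b} (\<lambda>x. (u x t)^2)"
      by (rule integral_diff[OF j1 iu2])
    have e3: "integral {a..b} (\<lambda>x. ?A * u x t) = ?A * integral {a..b} (\<lambda>x. u x t)"
      by (rule integral_mult[OF iu, symmetric])
    have e4: "integral {a..b} (\<lambda>x. a1 * (u x t * v x t)) = a1 * integral {a..b} (\<lambda>x. u x t * v x t)"
      by (rule integral_mult[OF iuv, symmetric])
    show ?thesis using e1 e2 e3 e4 by linarith
  qed
  have partU: "\<exists>Du. ((\<lambda>s. integral {a..b} (\<lambda>x. u x s)) has_real_derivative Du) (at t) \<and>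
           Du \<le> (lam1 + sqrt \<epsilon> / (2 * sqrt 3)) * integral {a..b} (\<lambda>x. u x t)
                 - integral {a..b} (\<lambda>x. (u x t)^2) + a1 * integral {a..b} (\<lambda>x. u x t * v x t)"
  proof (intro exI conjI)
    show "((\<lambda>s. integral {a..b} (\<lambda>x. u x s)) has_real_derivative integral {a..b} RU) (at t)" by (rule DU)
    show "integral {a..b} RU \<le> (lam1 + sqrt \<epsilon> / (2 * sqrt 3)) * integral {a..b} (\<lambda>x. u x t)
                 - integral {a..b} (\<lambda>x. (u x t)^2) + a1 * integral {a..b} (\<lambda>x. u x t * v x t)"
      using leU unfolding intUeq .
  qed
  have dVF1: "((\<lambda>y. (v y t)^4 / (v y t powr (4 - n2) + \<epsilon>) * (pdx a b ^^ 3) v y t) has_real_derivative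
      pdx a b (\<lambda>y s. (v y s)^4 / (v y s powr (4 - n2) + \<epsilon>) * (pdx a b ^^ 3) v y s) x t) (at x within {a..b})"
    if x: "x \<in> {a..b}" for x
  proof -
    have vx: "v x t > 0" using posx x by auto
    have "\<exists>D. ((\<lambda>y. (v y t)^4 / (v y t powr (4 - n2) + \<epsilon>) * (pdx a b ^^ 3) v y t) has_real_derivative D) (at x within {a..b})"
      by (rule dflux1[OF dv0[OF x] dv3[OF x] vx eps(1)])
    then obtain D where D: "((\<lambda>y. (v y t)^4 / (v y t powr (4 - n2) + \<epsilon>) * (pdx a b ^^ 3) v y t) has_real_derivative D) (at x within {a..b})" by blast
    show ?thesis using pdx_deriv[of a b x "\<lambda>y s. (v y s)^4 / (v y s powr (4 - n2) + \<epsilon>) * (pdx a b ^^ 3) v y s" t D] ab x D by simp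
  qed
  have dVF2: "((\<lambda>y. v y t powr (-\<alpha>) * pdx a b v y t) has_real_derivative
      pdx a b (\<lambda>y s. v y s powr (-\<alpha>) * pdx a b v y s) x t) (at x within {a..b})"
    if x: "x \<in> {a..b}" for x
  proof -
    have vx: "v x t > 0" using posx x by auto
    have "\<exists>D. ((\<lambda>y. v y t powr (-\<alpha>) * pdx a b v y t) has_real_derivative D) (at x within {a..b})"
      by (rule dflux2[OF dv0[OF x] dv1[OF x] vx])
    then obtain D where D: "((\<lambda>y. v y t powr (-\<alpha>) * pdx a b v y t) has_real_derivative D) (at x within {a..b})" by blast
    show ?thesis using pdx_deriv[of a b x "\<lambda>y s. v y s powr (-\<alpha>) * pdx a b v y s" t D] ab x D by simp
  qed
  have dVF4: "((\<lambda>y. v y t powr (5 - n2) / (v y t powr (4 - n2) + \<epsilon>) * pdx a b u y t) has_real_derivative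
      pdx a b (\<lambda>y s. v y s powr (5 - n2) / (v y s powr (4 - n2) + \<epsilon>) * pdx a b u y s) x t) (at x within {a..b})"
    if x: "x \<in> {a..b}" for x
  proof -
    have vx: "v x t > 0" using posx x by auto
    have "\<exists>D. ((\<lambda>y. v y t powr (5 - n2) / (v y t powr (4 - n2) + \<epsilon>) * pdx a b u y t) has_real_derivative D) (at x within {a..b})"
      by (rule dflux3[OF dv0[OF x] du1[OF x] vx eps(1)])
    then obtain D where D: "((\<lambda>y. v y t powr (5 - n2) / (v y t powr (4 - n2) + \<epsilon>) * pdx a b u y t) has_real_derivative D) (at x within {a..b})" by blast
    show ?thesis using pdx_deriv[of a b x "\<lambda>y s. v y s powr (5 - n2) / (v y s powr (4 - n2) + \<epsilon>) * pdx a b u y s" t D] ab x D by simp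
  qed
  define RV where "RV = (\<lambda>x. 3 * (v x t)^3 / (3 * (v x t)^2 + \<epsilon>) * (lam2 - v x t - a2 * u x t))"
  define GV where "GV = (\<lambda>y. - \<epsilon> * ((v y t)^4 / (v y t powr (4 - n2) + \<epsilon>) * (pdx a b ^^ 3) v y t)
        + \<epsilon> powr (\<alpha>/2) * (v y t powr (-\<alpha>) * pdx a b v y t)
        + D2 * pdx a b v y t
        + \<chi>2 * (v y t powr (5 - n2) / (v y t powr (4 - n2) + \<epsilon>) * pdx a b u y t))"
  define GV' where "GV' = (\<lambda>x. - \<epsilon> * pdx a b (\<lambda>y s. (v y s)^4 / (v y s powr (4 - n2) + \<epsilon>) * (pdx a b ^^ 3) v y s) x t
        + \<epsilon> powr (\<alpha>/2) * pdx a b (\<lambda>y s. v y s powr (-\<alpha>) * pdx a b v y s) x t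
        + D2 * (pdx a b ^^ 2) v x t
        + \<chi>2 * pdx a b (\<lambda>y s. v y s powr (5 - n2) / (v y s powr (4 - n2) + \<epsilon>) * pdx a b u y s) x t)"
  have dGV: "(GV has_real_derivative GV' x) (at x within {a..b})" if x: "x \<in> {a..b}" for x
    unfolding GV_def GV'_def
    by (intro DERIV_diff DERIV_add DERIV_cmult dVF1[OF x] dVF2[OF x] dv1[OF x] dVF4[OF x])
  have GVa: "GV a = 0" using bca unfolding GV_def by simp
  have GVb: "GV b = 0" using bcb unfolding GV_def by simp
  have eqV: "pdt v x t = GV' x + RV x" if "x \<in> {a<..<b}" for x
    using eq_v[OF that t] unfolding GV'_def RV_def by simp
  have nzv: "\<And>x. 3 * (v x t)^2 + \<epsilon> \<noteq> 0" using eps(1) by (smt (verit) zero_le_power2)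
  have cRV: "continuous_on {a..b} RV"
    unfolding RV_def by (intro continuous_intros cu cv) (use nzv in auto)
  have intV: "((\<lambda>x. pdt v x t) has_integral integral {a..b} RV) {a..b}"
    by (rule flux_integral[OF ab dGV GVa GVb eqV cRV])
  have DV: "((\<lambda>s. integral {a..b} (\<lambda>x. v x s)) has_real_derivative integral {a..b} RV) (at t)"
    using deriv_int[OF reg(2) t] integral_unique[OF intV] by simp
  have leV: "integral {a..b} RV \<le> integral {a..b} (\<lambda>x. (lam2 + sqrt \<epsilon> / (2 * sqrt 3)) * v x t - (v x t)^2 - a2 * (u x t * v x t) + a2 * sqrt \<epsilon> / (2 * sqrt 3) * u x t)"
  proof (rule integral_le)
    show "RV integrable_on {a..b}" using cRV integrable_continuous_interval by blast
    show "(\<lambda>x. (lam2 + sqrt \<epsilon> / (2 * sqrt 3)) * v x t - (v x t)^2 - a2 * (u x t * v x t) + a2 * sqrt \<epsilon> / (2 * sqrt 3) * u x t) integrable_on {a..b}"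
      by (rule integrable_continuous_interval) (intro continuous_intros cu cv)
    fix x assume x: "x \<in> {a..b}"
    show "RV x \<le> (lam2 + sqrt \<epsilon> / (2 * sqrt 3)) * v x t - (v x t)^2 - a2 * (u x t * v x t) + a2 * sqrt \<epsilon> / (2 * sqrt 3) * u x t"
      unfolding RV_def using posx[OF x] eps pars by (intro reac_v) auto
  qed
  have intVeq: "integral {a..b} (\<lambda>x. (lam2 + sqrt \<epsilon> / (2 * sqrt 3)) * v x t - (v x t)^2 - a2 * (u x t * v x t) + a2 * sqrt \<epsilon> / (2 * sqrt 3) * u x t)
     = (lam2 + sqrt \<epsilon> / (2 * sqrt 3)) * integral {a..b} (\<lambda>x. v x t) - integral {a..b} (\<lambda>x. (v x t)^2) - a2 * integral {a..b} (\<lambda>x. u x t * v x t) + a2 * sqrt \<epsilon> / (2 * sqrt 3) * integral {a..b} (\<lambda>x. u x t)"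
  proof -
    let ?A = "lam2 + sqrt \<epsilon> / (2 * sqrt 3)"
    let ?c = "a2 * sqrt \<epsilon> / (2 * sqrt 3)"
    have j1: "(\<lambda>x. ?A * v x t) integrable_on {a..b}"
      by (rule integrable_continuous_interval) (intro continuous_intros cv)
    have j2: "(\<lambda>x. ?A * v x t - (v x t)^2) integrable_on {a..b}"
      by (rule integrable_continuous_interval) (intro continuous_intros cv)
    have j3: "(\<lambda>x. a2 * (u x t * v x t)) integrable_on {a..b}"
      by (rule integrable_continuous_interval) (intro continuous_intros cu cv)
    have j4: "(\<lambda>x. ?A * v x t - (v x t)^2 - a2 * (u x t * v x t)) integrable_on {a..b}"
      by (rule integrable_continuous_interval) (intro continuous_intros cu cv)
    have j5: "(\<lambda>x. ?c * u x t) integrable_on {a..b}"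
      by (rule integrable_continuous_interval) (intro continuous_intros cu)
    have e0: "integral {a..b} (\<lambda>x. ?A * v x t - (v x t)^2 - a2 * (u x t * v x t) + ?c * u x t)
       = integral {a..b} (\<lambda>x. ?A * v x t - (v x t)^2 - a2 * (u x t * v x t)) + integral {a..b} (\<lambda>x. ?c * u x t)"
      by (rule integral_add[OF j4 j5])
    have e1: "integral {a..b} (\<lambda>x. ?A * v x t - (v x t)^2 - a2 * (u x t * v x t))
       = integral {a..b} (\<lambda>x. ?A * v x t - (v x t)^2) - integral {a..b} (\<lambda>x. a2 * (u x t * v x t))"
      by (rule integral_diff[OF j2 j3])
    have e2: "integral {a..b} (\<lambda>x. ?A * v x t - (v x t)^2) = integral {a..b} (\<lambda>x. ?A * v x t) - integral {a..b} (\<lambda>x. (v x t)^2)"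
      by (rule integral_diff[OF j1 iv2])
    have e3: "integral {a..b} (\<lambda>x. ?A * v x t) = ?A * integral {a..b} (\<lambda>x. v x t)"
      by (rule integral_mult[OF iv, symmetric])
    have e4: "integral {a..b} (\<lambda>x. a2 * (u x t * v x t)) = a2 * integral {a..b} (\<lambda>x. u x t * v x t)"
      by (rule integral_mult[OF iuv, symmetric])
    have e5: "integral {a..b} (\<lambda>x. ?c * u x t) = ?c * integral {a..b} (\<lambda>x. u x t)"
      by (rule integral_mult[OF iu, symmetric])
    show ?thesis using e0 e1 e2 e3 e4 e5 by linarith
  qed
  have partV: "\<exists>Dv. ((\<lambda>s. integral {a..b} (\<lambda>x. v x s)) has_real_derivative Dv) (at t) \<and>
           Dv \<le> (lam2 + sqrt \<epsilon> / (2 * sqrt 3)) * integral {a..b} (\<lambda>x. v x t)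
                 - integral {a..b} (\<lambda>x. (v x t)^2) - a2 * integral {a..b} (\<lambda>x. u x t * v x t)
                 + a2 * sqrt \<epsilon> / (2 * sqrt 3) * integral {a..b} (\<lambda>x. u x t)"
  proof (intro exI conjI)
    show "((\<lambda>s. integral {a..b} (\<lambda>x. v x s)) has_real_derivative integral {a..b} RV) (at t)" by (rule DV)
    show "integral {a..b} RV \<le> (lam2 + sqrt \<epsilon> / (2 * sqrt 3)) * integral {a..b} (\<lambda>x. v x t)
                 - integral {a..b} (\<lambda>x. (v x t)^2) - a2 * integral {a..b} (\<lambda>x. u x t * v x t)
                 + a2 * sqrt \<epsilon> / (2 * sqrt 3) * integral {a..b} (\<lambda>x. u x t)"
      using leV unfolding intVeq .
  qed
  show ?thesis using partU partV by (rule conjI)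
qed

end
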